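(* Let $z_1,z_2,\dots$ be a stationary finite-state Markov chain with stationary distribution $\mu$, and for $w\in\mathcal{K}$ and $N\in\mathbb{N}$ let $g^N(w)=\frac1N\sum_{i=1}^N\nabla f(w;z_i)$. Suppose $\|\nabla f(w;z)\|\le G$ for all $w\in\mathcal{K}$, $z\in\Omega$. Let $K\in\{1,\dots,N\}$ and $n=\lfloor N/K\rfloor$. Then for every $\delta>K(n-1)d_{\mathrm{mix}}(K)$ and every fixed $w\in\mathcal{K}$ (not depending on the chain), with probability at least $1-\delta$, \[ \|g^N(w)-\nabla F(w)\|\le\frac{6G}{\sqrt n}\Big(1+\sqrt{\log(K/\delta')}\Big)+\frac{2GK}{N}, \] where $\delta'=\delta-K(n-1)d_{\mathrm{mix}}(K)$.
   Context: $\Omega$ is the finite state space; $\mathcal{K}\subseteq\mathbb{R}^d$; $f(\cdot;z)$ is differentiable for each $z\in\Omega$ and $F(w)=\mathbb{E}_{z\sim\mu}[f(w;z)]$. For probability measures $P,Q$ on $\Omega$, $\|P-Q\|_{TV}=\sup_A|P(A)-Q(A)|$; $P^s(z,\cdot)$ denotes the law of $z_{s+1}$ given $z_1=z$, and $d_{\mathrm{mix}}(s)=\sup_{z\in\Omega}\|P^s(z,\cdot)-\mu\|_{TV}$. $\log$ is the natural logarithm. *)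

theory Defs
  imports "HOL-Analysis.Analysis"
begin

definition stochastic_kernel :: "('z::finite \<Rightarrow> 'z \<Rightarrow> real) \<Rightarrow> bool" where
  "stochastic_kernel P \<longleftrightarrow> (\<forall>z z'. P z z' \<ge> 0) \<and> (\<forall>z. (\<Sum>z'\<in>UNIV. P z z') = 1)"

definition distribution :: "('z::finite \<Rightarrow> real) \<Rightarrow> bool" where
  "distribution p \<longleftrightarrow> (\<forall>z. p z \<ge> 0) \<and> (\<Sum>z\<in>UNIV. p z) = 1"

definition stationary :: "('z::finite \<Rightarrow> 'z \<Rightarrow> real) \<Rightarrow> ('z \<Rightarrow> real) \<Rightarrow> bool" where
  "stationary P mu \<longleftrightarrow> (\<forall>z'. (\<Sum>z\<in>UNIV. mu z * P z z') = mu z')"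

fun kpow :: "('z::finite \<Rightarrow> 'z \<Rightarrow> real) \<Rightarrow> nat \<Rightarrow> 'z \<Rightarrow> 'z \<Rightarrow> real" where
  "kpow P 0 z z' = (if z = z' then 1 else 0)"
| "kpow P (Suc s) z z' = (\<Sum>y\<in>UNIV. kpow P s z y * P y z')"

definition tv_dist :: "('z::finite \<Rightarrow> real) \<Rightarrow> ('z \<Rightarrow> real) \<Rightarrow> real" where
  "tv_dist p q = Max ((\<lambda>A. \<bar>(\<Sum>x\<in>A. p x) - (\<Sum>x\<in>A. q x)\<bar>) ` UNIV)"

definition d_mix :: "('z::finite \<Rightarrow> 'z \<Rightarrow> real) \<Rightarrow> ('z \<Rightarrow> real) \<Rightarrow> nat \<Rightarrow> real" where
  "d_mix P mu s = Max ((\<lambda>z. tv_dist (kpow P s z) mu) ` UNIV)"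

text \<open>Probability that the path (z_1,...,z_N) of the Markov chain with initial law mu
  and kernel P lies in the event E (a predicate on paths indexed by 1..N).\<close>
definition path_prob ::
  "('z::finite \<Rightarrow> real) \<Rightarrow> ('z \<Rightarrow> 'z \<Rightarrow> real) \<Rightarrow> nat \<Rightarrow> ((nat \<Rightarrow> 'z) \<Rightarrow> bool) \<Rightarrow> real" where
  "path_prob mu P N E =
     (\<Sum>x\<in>PiE {1..N} (\<lambda>_. UNIV).
        if E x then mu (x 1) * (\<Prod>i\<in>{1..<N}. P (x i) (x (Suc i))) else 0)"

end

theory Submission
  imports Defs "HOL-Probability.Hoeffding"
begin


fun chain :: "('z::finite \<Rightarrow> 'z \<Rightarrow> real) \<Rightarrow> nat \<Rightarrow> ('z list \<Rightarrow> real) \<Rightarrow> 'z \<Rightarrow> real" where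
  "chain P 0 h z = h []"
| "chain P (Suc m) h z = (\<Sum>y\<in>UNIV. P z y * chain P m (\<lambda>ys. h (y # ys)) y)"

fun iexp :: "('z::finite \<Rightarrow> real) \<Rightarrow> nat \<Rightarrow> ('z list \<Rightarrow> real) \<Rightarrow> real" where
  "iexp mu 0 g = g []"
| "iexp mu (Suc n) g = (\<Sum>z\<in>UNIV. mu z * iexp mu n (\<lambda>us. g (z # us)))"

fun kexp :: "('z::finite \<Rightarrow> 'z \<Rightarrow> real) \<Rightarrow> nat \<Rightarrow> ('z list \<Rightarrow> real) \<Rightarrow> 'z \<Rightarrow> real" where
  "kexp Q 0 g z = g []"
| "kexp Q (Suc n) g z = (\<Sum>u\<in>UNIV. Q z u * kexp Q n (\<lambda>us. g (u # us)) u)"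

lemma sum_delta_mult:
  fixes f :: "'z::finite \<Rightarrow> real"
  shows "(\<Sum>y\<in>UNIV. (if z = y then 1 else 0) * f y) = f z"
    and "(\<Sum>y\<in>UNIV. f y * (if y = u then 1 else 0)) = f u"
proof -
  have "(\<Sum>y\<in>UNIV. (if z = y then 1 else 0) * f y) = (\<Sum>y\<in>UNIV. if z = y then f y else 0)"
    by (rule sum.cong) auto
  then show "(\<Sum>y\<in>UNIV. (if z = y then 1 else 0) * f y) = f z" by simp
  have "(\<Sum>y\<in>UNIV. f y * (if y = u then 1 else 0)) = (\<Sum>y\<in>UNIV. if y = u then f y else 0)"
    by (rule sum.cong) auto
  then show "(\<Sum>y\<in>UNIV. f y * (if y = u then 1 else 0)) = f u" by simp
qed

lemma chain_cong:
  "(\<And>ys. length ys = m \<Longrightarrow> h ys = h' ys) \<Longrightarrow> chain P m h z = chain P m h' z"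
proof (induction m arbitrary: h h' z)
  case 0 then show ?case by simp
next
  case (Suc m)
  show ?case by (simp, rule sum.cong, simp, rule arg_cong[where f="\<lambda>t. _ * t"], rule Suc.IH, simp add: Suc.prems)
qed

lemma chain_const:
  assumes "stochastic_kernel P"
  shows "chain P m (\<lambda>_. c) z = c"
proof (induction m arbitrary: z)
  case 0 then show ?case by simp
next
  case (Suc m)
  have "(\<Sum>y\<in>UNIV. P z y * c) = c" using assms unfolding stochastic_kernel_def
    by (simp add: sum_distrib_right[symmetric])
  then show ?case using Suc by simp
qed

lemma chain_append:
  "chain P (a + b) h z = chain P a (\<lambda>ys. chain P b (\<lambda>zs. h (ys @ zs)) (last (z # ys))) z"
proof (induction a arbitrary: h z)
  case 0 then show ?case by simp
next
  case (Suc a)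
  show ?case by (simp add: Suc.IH)
qed

lemma kpow_Suc_front:
  "kpow P (Suc a) z u = (\<Sum>y\<in>UNIV. P z y * kpow P a y u)"
proof (induction a arbitrary: z u)
  case 0
  show ?case by (simp add: sum_delta_mult)
next
  case (Suc a)
  have "kpow P (Suc (Suc a)) z u = (\<Sum>y\<in>UNIV. (\<Sum>w\<in>UNIV. P z w * kpow P a w y) * P y u)"
    using Suc by simp
  also have "\<dots> = (\<Sum>w\<in>UNIV. P z w * (\<Sum>y\<in>UNIV. kpow P a w y * P y u))"
    by (simp add: sum_distrib_right sum_distrib_left mult.assoc) (rule sum.swap)
  finally show ?case by simp
qed

lemma chain_last:
  "chain P a (\<lambda>ys. \<phi> (last (z # ys))) z = (\<Sum>u\<in>UNIV. kpow P a z u * \<phi> u)"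
proof (induction a arbitrary: z)
  case 0
  show ?case by (simp add: sum_delta_mult)
next
  case (Suc a)
  have "chain P (Suc a) (\<lambda>ys. \<phi> (last (z # ys))) z
     = (\<Sum>y\<in>UNIV. P z y * chain P a (\<lambda>ys. \<phi> (last (y # ys))) y)" by simp
  also have "\<dots> = (\<Sum>y\<in>UNIV. P z y * (\<Sum>u\<in>UNIV. kpow P a y u * \<phi> u))" using Suc by simp
  also have "\<dots> = (\<Sum>u\<in>UNIV. (\<Sum>y\<in>UNIV. P z y * kpow P a y u) * \<phi> u)"
    by (simp add: sum_distrib_right sum_distrib_left mult.assoc) (rule sum.swap)
  finally show ?case unfolding kpow_Suc_front .
qed

lemma kpow_stat:
  assumes "stationary P mu"
  shows "(\<Sum>z\<in>UNIV. mu z * kpow P a z u) = mu u"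
proof (induction a arbitrary: u)
  case 0 then show ?case by (simp add: if_distrib cong: if_cong)
next
  case (Suc a)
  have "(\<Sum>z\<in>UNIV. mu z * kpow P (Suc a) z u) = (\<Sum>y\<in>UNIV. (\<Sum>z\<in>UNIV. mu z * kpow P a z y) * P y u)"
    by (simp add: sum_distrib_right sum_distrib_left mult.assoc) (rule sum.swap)
  also have "\<dots> = mu u" using Suc assms unfolding stationary_def by simp
  finally show ?case .
qed

lemma kpow_nonneg:
  assumes "stochastic_kernel P" shows "kpow P a z u \<ge> 0"
  using assms unfolding stochastic_kernel_def
  by (induction a arbitrary: u) (auto intro!: sum_nonneg)

lemma kpow_rowsum:
  assumes "stochastic_kernel P" shows "(\<Sum>u\<in>UNIV. kpow P a z u) = 1"
proof (induction a)
  case 0 then show ?case by simp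
next
  case (Suc a)
  have "(\<Sum>u\<in>UNIV. kpow P (Suc a) z u) = (\<Sum>y\<in>UNIV. kpow P a z y * (\<Sum>u\<in>UNIV. P y u))"
    by (simp add: sum_distrib_left) (rule sum.swap)
  also have "\<dots> = 1" using assms Suc unfolding stochastic_kernel_def by simp
  finally show ?case .
qed

lemma stat_shift:
  assumes "stationary P mu"
  shows "(\<Sum>z\<in>UNIV. mu z * chain P (a + m) (\<lambda>ys. H (drop a ys)) z) = (\<Sum>z\<in>UNIV. mu z * chain P m H z)"
proof -
  have "chain P (a + m) (\<lambda>ys. H (drop a ys)) z = chain P a (\<lambda>ys. chain P m H (last (z # ys))) z" for z
    unfolding chain_append by (rule chain_cong) simp
  also have "\<dots> z = (\<Sum>u\<in>UNIV. kpow P a z u * chain P m H u)" for z by (rule chain_last)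
  finally have "(\<Sum>z\<in>UNIV. mu z * chain P (a + m) (\<lambda>ys. H (drop a ys)) z) 
      = (\<Sum>u\<in>UNIV. (\<Sum>z\<in>UNIV. mu z * kpow P a z u) * chain P m H u)"
    by (simp add: sum_distrib_right sum_distrib_left mult.assoc) (rule sum.swap)
  then show ?thesis using kpow_stat[OF assms] by simp
qed



fun sub :: "nat \<Rightarrow> nat \<Rightarrow> 'a list \<Rightarrow> 'a list" where
  "sub K 0 ys = []"
| "sub K (Suc n) ys = ys ! (K - 1) # sub K n (drop K ys)"

lemma sub_nth:
  assumes "1 \<le> K" "n * K \<le> length ys" "j < n"
  shows "sub K n ys ! j = ys ! (K - 1 + j * K)"
  using assms
proof (induction n arbitrary: ys j)
  case 0 then show ?case by simp
next
  case (Suc n)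
  show ?case
  proof (cases j)
    case 0 then show ?thesis by simp
  next
    case (Suc j')
    have "sub K n (drop K ys) ! j' = drop K ys ! (K - 1 + j' * K)"
      using Suc.prems Suc.IH[of "drop K ys" j'] Suc by simp
    also have "\<dots> = ys ! (K - 1 + j * K)" using Suc Suc.prems by (simp add: algebra_simps)
    finally show ?thesis using Suc by simp
  qed
qed

lemma chain_sub:
  assumes "1 \<le> K" "n * K \<le> m" and kernel: "stochastic_kernel P"
  shows "chain P m (\<lambda>ys. g (sub K n ys)) z = kexp (kpow P K) n g z"
  using assms(2)
proof (induction n arbitrary: g m z)
  case 0
  then show ?case using chain_const[OF kernel] by simp
next
  case (Suc n)
  define m' where "m' = m - K"
  have m: "m = K + m'" using Suc.prems unfolding m'_def by simp
  have m': "n * K \<le> m'" using Suc.prems unfolding m'_def by simp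
  define \<phi> where "\<phi> u = kexp (kpow P K) n (\<lambda>us. g (u # us)) u" for u
  have "chain P m (\<lambda>ys. g (sub K (Suc n) ys)) z
      = chain P K (\<lambda>ys. chain P m' (\<lambda>zs. g (sub K (Suc n) (ys @ zs))) (last (z # ys))) z"
    unfolding m chain_append ..
  also have "\<dots> = chain P K (\<lambda>ys. \<phi> (last (z # ys))) z"
  proof (rule chain_cong)
    fix ys :: "'a list" assume len: "length ys = K"
    then have ne: "ys \<noteq> []" using assms by auto
    have "(ys @ zs) ! (K - 1) = last ys" for zs
      using len ne assms(1) by (simp add: nth_append last_conv_nth)
    moreover have "drop K (ys @ zs) = zs" for zs using len by simp
    ultimately have "chain P m' (\<lambda>zs. g (sub K (Suc n) (ys @ zs))) (last (z # ys))
        = chain P m' (\<lambda>zs. g (last ys # sub K n zs)) (last ys)" using ne by simp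
    also have "\<dots> = \<phi> (last ys)" unfolding \<phi>_def by (rule Suc.IH[OF m'])
    finally show "chain P m' (\<lambda>zs. g (sub K (Suc n) (ys @ zs))) (last (z # ys)) = \<phi> (last (z # ys))"
      using ne by simp
  qed
  also have "\<dots> = (\<Sum>u\<in>UNIV. kpow P K z u * \<phi> u)" by (rule chain_last)
  finally show ?case unfolding \<phi>_def by simp
qed

lemma iexp_add: "iexp mu n (\<lambda>us. f us + g us) = iexp mu n f + iexp mu n g"
proof (induction n arbitrary: f g)
  case 0 then show ?case by simp
next
  case (Suc n)
  have "iexp mu (Suc n) (\<lambda>us. f us + g us)
      = (\<Sum>z\<in>UNIV. mu z * iexp mu n (\<lambda>us. f (z # us)) + mu z * iexp mu n (\<lambda>us. g (z # us)))"
    using Suc.IH by (simp add: distrib_left)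
  then show ?case by (simp add: sum.distrib)
qed

lemma iexp_scale: "iexp mu n (\<lambda>us. a * f us) = a * iexp mu n f"
proof (induction n arbitrary: f)
  case 0 then show ?case by simp
next
  case (Suc n)
  have "iexp mu (Suc n) (\<lambda>us. a * f us) = (\<Sum>z\<in>UNIV. a * (mu z * iexp mu n (\<lambda>us. f (z # us))))"
    using Suc.IH by (simp add: mult.left_commute)
  then show ?case by (simp add: sum_distrib_left)
qed

lemma iexp_const:
  assumes "distribution mu" shows "iexp mu n (\<lambda>_. c) = c"
proof (induction n)
  case 0 then show ?case by simp
next
  case (Suc n)
  have "iexp mu (Suc n) (\<lambda>_. c) = (\<Sum>z\<in>UNIV. mu z) * c" using Suc by (simp add: sum_distrib_right)
  then show ?case using assms unfolding distribution_def by simp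
qed

lemma iexp_mono:
  assumes "distribution mu" "\<And>us. length us = n \<Longrightarrow> f us \<le> g us"
  shows "iexp mu n f \<le> iexp mu n g"
  using assms(2)
proof (induction n arbitrary: f g)
  case 0 then show ?case by simp
next
  case (Suc n)
  have "mu z * iexp mu n (\<lambda>us. f (z # us)) \<le> mu z * iexp mu n (\<lambda>us. g (z # us))" for z
  proof (rule mult_left_mono)
    show "iexp mu n (\<lambda>us. f (z # us)) \<le> iexp mu n (\<lambda>us. g (z # us))"
      by (rule Suc.IH) (simp add: Suc.prems)
    show "0 \<le> mu z" using assms(1) unfolding distribution_def by simp
  qed
  then show ?case by (simp add: sum_mono)
qed

lemma tv_bound:
  fixes p q :: "'z::finite \<Rightarrow> real"
  assumes "\<And>y. 0 \<le> \<phi> y" "\<And>y. \<phi> y \<le> 1"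
  shows "(\<Sum>y\<in>UNIV. (p y - q y) * \<phi> y) \<le> tv_dist p q"
proof -
  define A where "A = {y. p y > q y}"
  have "(\<Sum>y\<in>UNIV. (p y - q y) * \<phi> y) \<le> (\<Sum>y\<in>UNIV. if y \<in> A then p y - q y else 0)"
  proof (rule sum_mono)
    fix y
    show "(p y - q y) * \<phi> y \<le> (if y \<in> A then p y - q y else 0)"
    proof (cases "y \<in> A")
      case True
      then have "p y - q y \<ge> 0" by (simp add: A_def)
      then show ?thesis using True mult_left_mono[OF assms(2)[of y], of "p y - q y"] by simp
    next
      case False
      then have "p y - q y \<le> 0" by (simp add: A_def)
      then show ?thesis using False mult_nonpos_nonneg[OF _ assms(1)[of y]] by simp
    qed
  qed
  also have "\<dots> = (\<Sum>y\<in>A. p y - q y)" by (simp add: sum.If_cases)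
  also have "\<dots> \<le> \<bar>(\<Sum>x\<in>A. p x) - (\<Sum>x\<in>A. q x)\<bar>" by (simp add: sum_subtractf)
  also have "\<dots> \<le> tv_dist p q" unfolding tv_dist_def by (rule Max_ge) auto
  finally show ?thesis .
qed

lemma hybrid:
  assumes dist: "distribution mu"
    and Qnn: "\<And>z u. Q z u \<ge> 0" and Qrow: "\<And>z. (\<Sum>u\<in>UNIV. Q z u) = 1"
    and tv: "\<And>z. tv_dist (Q z) mu \<le> d"
    and g01: "\<And>us. 0 \<le> g us \<and> g us \<le> 1"
  shows "kexp Q n g z - iexp mu n g \<le> real n * d"
  using g01
proof (induction n arbitrary: g z)
  case 0 then show ?case by simp
next
  case (Suc n)
  define gu where "gu u = (\<lambda>us. g (u # us))" for u
  have ib: "0 \<le> iexp mu n (gu u) \<and> iexp mu n (gu u) \<le> 1" for u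
  proof -
    have "iexp mu n (\<lambda>_. 0) \<le> iexp mu n (gu u)"
      by (rule iexp_mono[OF dist]) (simp add: gu_def Suc.prems)
    moreover have "iexp mu n (gu u) \<le> iexp mu n (\<lambda>_. 1)"
      by (rule iexp_mono[OF dist]) (simp add: gu_def Suc.prems)
    ultimately show ?thesis by (simp add: iexp_const[OF dist])
  qed
  have "kexp Q (Suc n) g z - iexp mu (Suc n) g
     = (\<Sum>u\<in>UNIV. Q z u * (kexp Q n (gu u) u - iexp mu n (gu u)))
       + (\<Sum>u\<in>UNIV. (Q z u - mu u) * iexp mu n (gu u))"
  proof -
    have e: "Q z u * (kexp Q n (gu u) u - iexp mu n (gu u)) + (Q z u - mu u) * iexp mu n (gu u)
        = Q z u * kexp Q n (gu u) u - mu u * iexp mu n (gu u)" for u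
      by (simp add: algebra_simps)
    have "(\<Sum>u\<in>UNIV. Q z u * (kexp Q n (gu u) u - iexp mu n (gu u)))
       + (\<Sum>u\<in>UNIV. (Q z u - mu u) * iexp mu n (gu u))
       = (\<Sum>u\<in>UNIV. Q z u * kexp Q n (gu u) u - mu u * iexp mu n (gu u))"
      unfolding sum.distrib[symmetric] e ..
    also have "\<dots> = kexp Q (Suc n) g z - iexp mu (Suc n) g"
      unfolding sum_subtractf gu_def by simp
    finally show ?thesis by simp
  qed
  also have "\<dots> \<le> (\<Sum>u\<in>UNIV. Q z u * (real n * d)) + d"
  proof (rule add_mono)
    show "(\<Sum>u\<in>UNIV. Q z u * (kexp Q n (gu u) u - iexp mu n (gu u))) \<le> (\<Sum>u\<in>UNIV. Q z u * (real n * d))"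
      by (intro sum_mono mult_left_mono Suc.IH) (auto simp: gu_def Suc.prems Qnn)
    show "(\<Sum>u\<in>UNIV. (Q z u - mu u) * iexp mu n (gu u)) \<le> d"
      using tv_bound[of "\<lambda>u. iexp mu n (gu u)" "Q z" mu] ib tv[of z] by auto
  qed
  also have "(\<Sum>u\<in>UNIV. Q z u * (real n * d)) = real n * d"
    by (subst sum_distrib_right[symmetric]) (simp add: Qrow)
  also have "real n * d + d = real (Suc n) * d" by (simp add: algebra_simps)
  finally show ?case .
qed

lemma stat_kexp:
  assumes dist: "distribution mu" and kernel: "stochastic_kernel P" and stat: "stationary P mu"
    and tv: "\<And>z. tv_dist (kpow P K z) mu \<le> d"
    and g01: "\<And>us. 0 \<le> g us \<and> g us \<le> 1"
  shows "(\<Sum>z\<in>UNIV. mu z * kexp (kpow P K) (Suc n) g z) \<le> iexp mu (Suc n) g + real n * d"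
proof -
  have "(\<Sum>z\<in>UNIV. mu z * kexp (kpow P K) (Suc n) g z)
      = (\<Sum>z\<in>UNIV. \<Sum>u\<in>UNIV. mu z * kpow P K z u * kexp (kpow P K) n (\<lambda>us. g (u # us)) u)"
    by (simp only: kexp.simps sum_distrib_left mult.assoc)
  also have "\<dots> = (\<Sum>u\<in>UNIV. \<Sum>z\<in>UNIV. mu z * kpow P K z u * kexp (kpow P K) n (\<lambda>us. g (u # us)) u)"
    by (rule sum.swap)
  also have "\<dots> = (\<Sum>u\<in>UNIV. (\<Sum>z\<in>UNIV. mu z * kpow P K z u) * kexp (kpow P K) n (\<lambda>us. g (u # us)) u)"
    by (simp only: sum_distrib_right)
  also have "\<dots> = (\<Sum>u\<in>UNIV. mu u * kexp (kpow P K) n (\<lambda>us. g (u # us)) u)"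
    using kpow_stat[OF stat] by simp
  also have "\<dots> \<le> (\<Sum>u\<in>UNIV. mu u * (iexp mu n (\<lambda>us. g (u # us)) + real n * d))"
  proof (rule sum_mono)
    fix u
    have "kexp (kpow P K) n (\<lambda>us. g (u # us)) u - iexp mu n (\<lambda>us. g (u # us)) \<le> real n * d"
      by (rule hybrid[OF dist kpow_nonneg[OF kernel] kpow_rowsum[OF kernel] tv]) (rule g01)
    moreover have "mu u \<ge> 0" using dist unfolding distribution_def by auto
    ultimately show "mu u * kexp (kpow P K) n (\<lambda>us. g (u # us)) u \<le> mu u * (iexp mu n (\<lambda>us. g (u # us)) + real n * d)"
      by (intro mult_left_mono) auto
  qed
  also have "\<dots> = (\<Sum>u\<in>UNIV. mu u * iexp mu n (\<lambda>us. g (u # us))) + (\<Sum>u\<in>UNIV. mu u) * (real n * d)"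
    by (simp add: distrib_left sum.distrib sum_distrib_right)
  also have "\<dots> = iexp mu (Suc n) g + real n * d"
    using dist unfolding distribution_def by simp
  finally show ?thesis .
qed



definition pexp :: "('z::finite \<Rightarrow> real) \<Rightarrow> ('z \<Rightarrow> 'z \<Rightarrow> real) \<Rightarrow> nat \<Rightarrow> ((nat \<Rightarrow> 'z) \<Rightarrow> real) \<Rightarrow> real" where
  "pexp mu P N H = (\<Sum>x\<in>PiE {1..N} (\<lambda>_. UNIV). mu (x 1) * (\<Prod>i\<in>{1..<N}. P (x i) (x (Suc i))) * H x)"

lemma path_prob_pexp: "path_prob mu P N E = pexp mu P N (\<lambda>x. if E x then 1 else 0)"
  unfolding path_prob_def pexp_def by (rule sum.cong) auto

fun wch :: "('z \<Rightarrow> 'z \<Rightarrow> real) \<Rightarrow> 'z \<Rightarrow> 'z list \<Rightarrow> real" where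
  "wch P z [] = 1"
| "wch P z (y # ys) = P z y * wch P y ys"

lemma finite_lists_len: "finite {xs :: ('z::finite) list. length xs = m}"
  using finite_lists_length_eq[of "UNIV :: 'z set" m] by simp

lemma sum_lists_Suc:
  fixes F :: "('z::finite) list \<Rightarrow> real"
  shows "(\<Sum>xs\<in>{xs. length xs = Suc m}. F xs) = (\<Sum>y\<in>UNIV. \<Sum>ys\<in>{ys. length ys = m}. F (y # ys))"
proof -
  have eq: "{xs :: 'z list. length xs = Suc m} = (\<lambda>(y, ys). y # ys) ` (UNIV \<times> {ys. length ys = m})"
  proof
    show "{xs :: 'z list. length xs = Suc m} \<subseteq> (\<lambda>(y, ys). y # ys) ` (UNIV \<times> {ys. length ys = m})"
    proof
      fix xs :: "'z list" assume "xs \<in> {xs. length xs = Suc m}"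
      then obtain y ys where "xs = y # ys" "length ys = m" by (cases xs) auto
      then show "xs \<in> (\<lambda>(y, ys). y # ys) ` (UNIV \<times> {ys. length ys = m})" by force
    qed
  qed auto
  have inj: "inj_on (\<lambda>(y, ys). y # ys) (UNIV \<times> {ys :: 'z list. length ys = m})"
    by (auto simp: inj_on_def)
  have "(\<Sum>xs\<in>{xs. length xs = Suc m}. F xs) = (\<Sum>p\<in>UNIV \<times> {ys. length ys = m}. F (fst p # snd p))"
    unfolding eq by (subst sum.reindex[OF inj]) (simp add: case_prod_beta)
  also have "\<dots> = (\<Sum>y\<in>UNIV. \<Sum>ys\<in>{ys. length ys = m}. F (y # ys))"
    by (simp add: sum.cartesian_product case_prod_beta)
  finally show ?thesis .
qed

lemma chain_sum: "chain P m h z = (\<Sum>ys\<in>{ys. length ys = m}. wch P z ys * h ys)"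
proof (induction m arbitrary: h z)
  case 0 then show ?case by simp
next
  case (Suc m)
  have "chain P (Suc m) h z = (\<Sum>y\<in>UNIV. P z y * (\<Sum>ys\<in>{ys. length ys = m}. wch P y ys * h (y # ys)))"
    using Suc by simp
  also have "\<dots> = (\<Sum>y\<in>UNIV. \<Sum>ys\<in>{ys. length ys = m}. wch P z (y # ys) * h (y # ys))"
    by (simp add: sum_distrib_left mult.assoc)
  also have "\<dots> = (\<Sum>ys\<in>{ys. length ys = Suc m}. wch P z ys * h ys)"
    by (rule sum_lists_Suc[symmetric])
  finally show ?case .
qed

lemma wch_prod: "wch P z ys = (\<Prod>i<length ys. P ((z # ys) ! i) ((z # ys) ! Suc i))"
proof (induction ys arbitrary: z)
  case Nil then show ?case by simp
next
  case (Cons y ys)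
  show ?case unfolding length_Cons prod.lessThan_Suc_shift using Cons by simp
qed

definition tofun :: "'z list \<Rightarrow> nat \<Rightarrow> 'z" where
  "tofun xs = (\<lambda>i. if i \<in> {1..length xs} then xs ! (i - 1) else undefined)"

lemma bij_tofun: "bij_betw tofun {xs :: 'z list. length xs = N} (PiE {1..N} (\<lambda>_. UNIV))"
proof (rule bij_betw_imageI)
  show "inj_on tofun {xs :: 'z list. length xs = N}"
  proof (rule inj_onI)
    fix xs ys :: "'z list" assume xs: "xs \<in> {xs. length xs = N}" and ys: "ys \<in> {xs. length xs = N}"
      and eq: "tofun xs = tofun ys"
    show "xs = ys"
    proof (rule nth_equalityI)
      show "length xs = length ys" using xs ys by simp
      fix i assume "i < length xs"
      then have "tofun xs (Suc i) = tofun ys (Suc i)" using eq by simp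
      then show "xs ! i = ys ! i" using \<open>i < length xs\<close> xs ys unfolding tofun_def by simp
    qed
  qed
  show "tofun ` {xs :: 'z list. length xs = N} = PiE {1..N} (\<lambda>_. UNIV)"
  proof
    show "tofun ` {xs :: 'z list. length xs = N} \<subseteq> PiE {1..N} (\<lambda>_. UNIV)"
      unfolding tofun_def by (auto simp: PiE_def extensional_def)
    show "PiE {1..N} (\<lambda>_. UNIV) \<subseteq> tofun ` {xs :: 'z list. length xs = N}"
    proof
      fix x :: "nat \<Rightarrow> 'z" assume x: "x \<in> PiE {1..N} (\<lambda>_. UNIV)"
      have "x = tofun (map x [1..<Suc N])"
      proof
        fix i show "x i = tofun (map x [1..<Suc N]) i"
        proof (cases "i \<in> {1..N}")
          case True
          then have "map x [1..<Suc N] ! (i - 1) = x (1 + (i - 1))"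
            by (intro nth_map_upt) auto
          then show ?thesis using True by (simp add: tofun_def)
        next
          case False
          then show ?thesis using x by (auto simp: tofun_def PiE_def extensional_def)
        qed
      qed
      then show "x \<in> tofun ` {xs :: 'z list. length xs = N}" by force
    qed
  qed
qed

lemma stat_front:
  assumes "stationary P mu"
  shows "(\<Sum>z\<in>UNIV. mu z * chain P m (\<lambda>ys. h (z # ys)) z) = (\<Sum>z\<in>UNIV. mu z * chain P (Suc m) h z)"
proof -
  have "(\<Sum>z\<in>UNIV. mu z * chain P (Suc m) h z) = (\<Sum>z\<in>UNIV. \<Sum>y\<in>UNIV. mu z * P z y * chain P m (\<lambda>ys. h (y # ys)) y)"
    by (simp add: sum_distrib_left mult.assoc)
  also have "\<dots> = (\<Sum>y\<in>UNIV. \<Sum>z\<in>UNIV. mu z * P z y * chain P m (\<lambda>ys. h (y # ys)) y)"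
    by (rule sum.swap)
  also have "\<dots> = (\<Sum>y\<in>UNIV. (\<Sum>z\<in>UNIV. mu z * P z y) * chain P m (\<lambda>ys. h (y # ys)) y)"
    by (simp only: sum_distrib_right)
  also have "\<dots> = (\<Sum>y\<in>UNIV. mu y * chain P m (\<lambda>ys. h (y # ys)) y)"
    using assms unfolding stationary_def by simp
  finally show ?thesis by simp
qed

lemma pexp_chain:
  assumes stat: "stationary P mu" and N: "1 \<le> N"
  shows "pexp mu P N H = (\<Sum>z\<in>UNIV. mu z * chain P N (\<lambda>ys. H (tofun ys)) z)"
proof -
  obtain m where Nm: "N = Suc m" using N by (cases N) auto
  have "pexp mu P N H = (\<Sum>xs\<in>{xs. length xs = N}. mu (tofun xs 1) *
        (\<Prod>i\<in>{1..<N}. P (tofun xs i) (tofun xs (Suc i))) * H (tofun xs))"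
    unfolding pexp_def by (rule sum.reindex_bij_betw[OF bij_tofun, symmetric])
  also have "\<dots> = (\<Sum>y\<in>UNIV. \<Sum>ys\<in>{ys. length ys = m}. mu (tofun (y # ys) 1) *
        (\<Prod>i\<in>{1..<Suc m}. P (tofun (y # ys) i) (tofun (y # ys) (Suc i))) * H (tofun (y # ys)))"
    unfolding Nm by (rule sum_lists_Suc)
  also have "\<dots> = (\<Sum>y\<in>UNIV. \<Sum>ys\<in>{ys. length ys = m}. mu y * (wch P y ys * H (tofun (y # ys))))"
  proof (intro sum.cong refl)
    fix y ys assume ys: "ys \<in> {ys :: 'a list. length ys = m}"
    have "(\<Prod>i\<in>{1..<Suc m}. P (tofun (y # ys) i) (tofun (y # ys) (Suc i)))
        = (\<Prod>i\<in>{0..<m}. P (tofun (y # ys) (Suc i)) (tofun (y # ys) (Suc (Suc i))))"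
      by (simp only: One_nat_def prod.shift_bounds_Suc_ivl)
    also have "\<dots> = (\<Prod>i<m. P ((y # ys) ! i) ((y # ys) ! Suc i))"
      using ys by (intro prod.cong) (auto simp: tofun_def)
    also have "\<dots> = wch P y ys" using ys by (simp add: wch_prod)
    finally show "mu (tofun (y # ys) 1) * (\<Prod>i\<in>{1..<Suc m}. P (tofun (y # ys) i) (tofun (y # ys) (Suc i))) * H (tofun (y # ys))
        = mu y * (wch P y ys * H (tofun (y # ys)))"
      by (simp add: tofun_def)
  qed
  also have "\<dots> = (\<Sum>y\<in>UNIV. mu y * chain P m (\<lambda>ys. H (tofun (y # ys))) y)"
    by (simp add: chain_sum sum_distrib_left)
  also have "\<dots> = (\<Sum>z\<in>UNIV. mu z * chain P N (\<lambda>ys. H (tofun ys)) z)"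
    unfolding Nm by (rule stat_front[OF stat])
  finally show ?thesis .
qed



lemma cosh_bound:
  fixes x :: real assumes "x \<ge> 0"
  shows "(exp (-x) + exp x) / 2 \<le> exp (x\<^sup>2 / 2)"
proof -
  have "-(2*x) * (1/2) + ln (1 + (1/2) * (exp (2*x) - 1)) \<le> (2*x)\<^sup>2 / 8"
    using Hoeffdings_lemma_aux[of "2*x" "1/2"] assms by simp
  then have "ln ((1 + exp (2*x)) / 2) \<le> x + x\<^sup>2 / 2"
    by (simp add: power2_eq_square field_simps)
  moreover have "(1 + exp (2*x)) / 2 > 0" by (simp add: add_pos_pos)
  ultimately have "(1 + exp (2*x)) / 2 \<le> exp (x + x\<^sup>2 / 2)"
    by (metis exp_le_cancel_iff exp_ln)
  then have "exp (-x) * ((1 + exp (2*x)) / 2) \<le> exp (-x) * exp (x + x\<^sup>2 / 2)"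
    by (intro mult_left_mono) auto
  moreover have "exp (-x) * ((1 + exp (2*x)) / 2) = (exp (-x) + exp x) / 2"
    by (simp add: field_simps exp_add[symmetric] mult_exp_exp)
  moreover have "exp (-x) * exp (x + x\<^sup>2 / 2) = exp (x\<^sup>2 / 2)"
    by (simp add: mult_exp_exp)
  ultimately show ?thesis by simp
qed

lemma hoeff_lite:
  fixes mu D :: "'z::finite \<Rightarrow> real"
  assumes dist: "distribution mu" and l: "l \<ge> 0" and c: "c \<ge> 0"
    and Db: "\<And>z. \<bar>D z\<bar> \<le> c" and D0: "(\<Sum>z\<in>UNIV. mu z * D z) = 0"
  shows "(\<Sum>z\<in>UNIV. mu z * exp (l * D z)) \<le> exp (l\<^sup>2 * c\<^sup>2 / 2)"
proof (cases "c = 0")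
  case True
  then have "D z = 0" for z using Db[of z] by simp
  then show ?thesis using dist unfolding distribution_def by simp
next
  case False
  then have cpos: "c > 0" using c by simp
  have pt: "exp (l * D z) \<le> ((c - D z) / (2*c)) * exp (l * (-c)) + ((c + D z) / (2*c)) * exp (l * c)" for z
  proof -
    define t where "t = (c + D z) / (2*c)"
    have t0: "0 \<le> t" "t \<le> 1" using Db[of z] cpos unfolding t_def by (auto simp: field_simps abs_le_iff)
    have e1: "(1 - t) *\<^sub>R (-c) + t *\<^sub>R c = D z" using cpos unfolding t_def by (simp add: field_simps)
    have e2: "1 - t = (c - D z) / (2*c)" using cpos unfolding t_def by (simp add: field_simps)
    have "exp (l * ((1 - t) *\<^sub>R (-c) + t *\<^sub>R c)) \<le> (1 - t) * exp (l * (-c)) + t * exp (l * c)"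
      by (rule convex_onD[OF convex_on_exp[OF l] t0]) auto
    then have "exp (l * D z) \<le> (1 - t) * exp (l * (-c)) + t * exp (l * c)" by (simp only: e1)
    then show ?thesis unfolding e2 by (simp only: t_def)
  qed
  have "(\<Sum>z\<in>UNIV. mu z * exp (l * D z))
     \<le> (\<Sum>z\<in>UNIV. mu z * (((c - D z) / (2*c)) * exp (l * (-c)) + ((c + D z) / (2*c)) * exp (l * c)))"
    using dist pt unfolding distribution_def by (intro sum_mono mult_left_mono) auto
  also have "\<dots> = ((\<Sum>z\<in>UNIV. mu z) * c - (\<Sum>z\<in>UNIV. mu z * D z)) / (2*c) * exp (l * (-c))
      + ((\<Sum>z\<in>UNIV. mu z) * c + (\<Sum>z\<in>UNIV. mu z * D z)) / (2*c) * exp (l * c)"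
    by (simp add: sum.distrib sum_subtractf sum_distrib_left sum_distrib_right sum_divide_distrib
        algebra_simps diff_divide_distrib add_divide_distrib)
  also have "\<dots> = (exp (-(l*c)) + exp (l*c)) / 2"
    using dist D0 cpos unfolding distribution_def by (simp add: field_simps)
  also have "\<dots> \<le> exp ((l*c)\<^sup>2 / 2)" using l c by (intro cosh_bound) simp
  finally show ?thesis by (simp add: power_mult_distrib)
qed

definition Ssum :: "('z \<Rightarrow> 'v::real_normed_vector) \<Rightarrow> 'z list \<Rightarrow> 'v" where
  "Ssum Y us = sum_list (map Y us)"

lemma Ssum_Cons [simp]: "Ssum Y (z # us) = Y z + Ssum Y us"
  by (simp add: Ssum_def)

lemma A_lip:
  fixes Y :: "'z::finite \<Rightarrow> 'v::real_normed_vector"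
  assumes dist: "distribution mu"
  shows "iexp mu n (\<lambda>us. norm (v1 + Ssum Y us)) \<le> iexp mu n (\<lambda>us. norm (v2 + Ssum Y us)) + norm (v1 - v2)"
proof -
  have "iexp mu n (\<lambda>us. norm (v1 + Ssum Y us)) \<le> iexp mu n (\<lambda>us. norm (v2 + Ssum Y us) + norm (v1 - v2))"
  proof (rule iexp_mono[OF dist])
    fix us
    have "v1 + Ssum Y us = (v2 + Ssum Y us) + (v1 - v2)" by (simp add: algebra_simps)
    then show "norm (v1 + Ssum Y us) \<le> norm (v2 + Ssum Y us) + norm (v1 - v2)"
      by (metis norm_triangle_ineq)
  qed
  also have "\<dots> = iexp mu n (\<lambda>us. norm (v2 + Ssum Y us)) + norm (v1 - v2)"
    by (simp add: iexp_add iexp_const[OF dist])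
  finally show ?thesis .
qed

lemma second_moment:
  fixes Y :: "'z::finite \<Rightarrow> 'v::real_inner"
  assumes dist: "distribution mu" and Yb: "\<And>z. norm (Y z) \<le> c"
    and Y0: "(\<Sum>z\<in>UNIV. mu z *\<^sub>R Y z) = 0"
  shows "iexp mu n (\<lambda>us. (norm (v + Ssum Y us))\<^sup>2) \<le> (norm v)\<^sup>2 + real n * c\<^sup>2"
proof (induction n arbitrary: v)
  case 0 then show ?case by (simp add: Ssum_def)
next
  case (Suc n)
  have mu0: "\<And>z. mu z \<ge> 0" and mu1: "(\<Sum>z\<in>UNIV. mu z) = 1" using dist unfolding distribution_def by auto
  have c0: "c \<ge> 0" using Yb[of undefined] norm_ge_zero[of "Y undefined"] by linarith
  have "iexp mu (Suc n) (\<lambda>us. (norm (v + Ssum Y us))\<^sup>2)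
      = (\<Sum>z\<in>UNIV. mu z * iexp mu n (\<lambda>us. (norm ((v + Y z) + Ssum Y us))\<^sup>2))"
    by (simp add: add.assoc)
  also have "\<dots> \<le> (\<Sum>z\<in>UNIV. mu z * ((norm (v + Y z))\<^sup>2 + real n * c\<^sup>2))"
    by (intro sum_mono mult_left_mono Suc.IH mu0)
  also have "\<dots> = (\<Sum>z\<in>UNIV. mu z * ((norm v)\<^sup>2 + (norm (Y z))\<^sup>2 + real n * c\<^sup>2)) + 2 * inner v (\<Sum>z\<in>UNIV. mu z *\<^sub>R Y z)"
  proof -
    have "(norm (v + Y z))\<^sup>2 = (norm v)\<^sup>2 + (norm (Y z))\<^sup>2 + 2 * inner v (Y z)" for z
      using dot_norm[of v "Y z"] by simp
    then show ?thesis
      by (simp add: inner_sum_right sum_distrib_left sum.distrib[symmetric] algebra_simps)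
  qed
  also have "\<dots> \<le> (\<Sum>z\<in>UNIV. mu z * ((norm v)\<^sup>2 + c\<^sup>2 + real n * c\<^sup>2))"
  proof -
    have "(norm (Y z))\<^sup>2 \<le> c\<^sup>2" for z using Yb[of z] by (simp add: power_mono)
    then have "(\<Sum>z\<in>UNIV. mu z * ((norm v)\<^sup>2 + (norm (Y z))\<^sup>2 + real n * c\<^sup>2))
        \<le> (\<Sum>z\<in>UNIV. mu z * ((norm v)\<^sup>2 + c\<^sup>2 + real n * c\<^sup>2))"
      by (intro sum_mono mult_left_mono mu0) auto
    then show ?thesis using Y0 by simp
  qed
  also have "\<dots> = (\<Sum>z\<in>UNIV. mu z) * ((norm v)\<^sup>2 + c\<^sup>2 + real n * c\<^sup>2)"
    by (simp only: sum_distrib_right)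
  also have "\<dots> = (norm v)\<^sup>2 + real (Suc n) * c\<^sup>2"
    by (simp add: mu1 algebra_simps)
  finally show ?case .
qed



lemma mgf_bound:
  fixes Y :: "'z::finite \<Rightarrow> 'v::real_normed_vector"
  assumes dist: "distribution mu" and l: "l \<ge> 0" and c: "c \<ge> 0"
    and Yd: "\<And>z z'. norm (Y z - Y z') \<le> c"
  shows "iexp mu n (\<lambda>us. exp (l * (norm (v + Ssum Y us) - iexp mu n (\<lambda>us. norm (v + Ssum Y us)))))
         \<le> exp (real n * (l\<^sup>2 * c\<^sup>2 / 2))"
proof (induction n arbitrary: v)
  case 0 then show ?case by simp
next
  case (Suc n)
  have mu0: "\<And>z. mu z \<ge> 0" and mu1: "(\<Sum>z\<in>UNIV. mu z) = 1" using dist unfolding distribution_def by auto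
  define A where "A m w = iexp mu m (\<lambda>us. norm (w + Ssum Y us))" for m w
  have AS: "A (Suc n) v = (\<Sum>z\<in>UNIV. mu z * A n (v + Y z))"
    unfolding A_def by (simp add: add.assoc)
  define D where "D z = A n (v + Y z) - A (Suc n) v" for z
  have lip: "\<bar>A n (v + Y z) - A n (v + Y z')\<bar> \<le> c" for z z'
  proof -
    have "A n (v + Y z) \<le> A n (v + Y z') + norm ((v + Y z) - (v + Y z'))"
      unfolding A_def by (rule A_lip[OF dist])
    moreover have "A n (v + Y z') \<le> A n (v + Y z) + norm ((v + Y z') - (v + Y z))"
      unfolding A_def by (rule A_lip[OF dist])
    moreover have "norm ((v + Y z) - (v + Y z')) \<le> c" "norm ((v + Y z') - (v + Y z)) \<le> c"
      using Yd[of z z'] Yd[of z' z] by simp_all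
    ultimately show ?thesis by linarith
  qed
  have Db: "\<bar>D z\<bar> \<le> c" for z
  proof -
    have "D z = (\<Sum>z'\<in>UNIV. mu z' * (A n (v + Y z) - A n (v + Y z')))"
      unfolding D_def AS by (simp add: right_diff_distrib sum_subtractf sum_distrib_right[symmetric] mu1)
    also have "\<bar>\<dots>\<bar> \<le> (\<Sum>z'\<in>UNIV. \<bar>mu z' * (A n (v + Y z) - A n (v + Y z'))\<bar>)"
      by (rule sum_abs)
    also have "\<dots> \<le> (\<Sum>z'\<in>UNIV. mu z' * c)"
      by (intro sum_mono) (simp add: abs_mult mu0 lip mult_left_mono)
    also have "\<dots> = c" by (simp add: sum_distrib_right[symmetric] mu1)
    finally show ?thesis .
  qed
  have D0: "(\<Sum>z\<in>UNIV. mu z * D z) = 0"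
    unfolding D_def by (simp add: right_diff_distrib sum_subtractf sum_distrib_right[symmetric] mu1 AS[symmetric])
  define K where "K = l\<^sup>2 * c\<^sup>2 / 2"
  have "iexp mu (Suc n) (\<lambda>us. exp (l * (norm (v + Ssum Y us) - A (Suc n) v)))
      = (\<Sum>z\<in>UNIV. mu z * iexp mu n (\<lambda>us. exp (l * D z) * exp (l * (norm ((v + Y z) + Ssum Y us) - A n (v + Y z)))))"
  proof -
    have "exp (l * (norm ((v + Y z) + Ssum Y us) - A (Suc n) v))
        = exp (l * D z) * exp (l * (norm ((v + Y z) + Ssum Y us) - A n (v + Y z)))" for z us
      unfolding D_def by (simp add: mult_exp_exp algebra_simps)
    then show ?thesis by (simp add: add.assoc)
  qed
  also have "\<dots> = (\<Sum>z\<in>UNIV. mu z * (exp (l * D z) * iexp mu n (\<lambda>us. exp (l * (norm ((v + Y z) + Ssum Y us) - A n (v + Y z))))))"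
    by (simp only: iexp_scale)
  also have "\<dots> \<le> (\<Sum>z\<in>UNIV. mu z * (exp (l * D z) * exp (real n * K)))"
    using Suc.IH unfolding A_def K_def
    by (intro sum_mono mult_left_mono mu0) auto
  also have "\<dots> = (\<Sum>z\<in>UNIV. mu z * exp (l * D z)) * exp (real n * K)"
    by (simp add: sum_distrib_right mult.assoc)
  also have "\<dots> \<le> exp K * exp (real n * K)"
    unfolding K_def by (intro mult_right_mono hoeff_lite[OF dist l c Db D0]) auto
  also have "\<dots> = exp (real (Suc n) * K)" by (simp add: mult_exp_exp algebra_simps)
  finally show ?case unfolding A_def K_def .
qed

lemma iexp_affine:
  assumes "distribution mu"
  shows "iexp mu n (\<lambda>us. a * f us + b) = a * iexp mu n f + b"
  by (simp add: iexp_add iexp_scale iexp_const[OF assms])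

lemma conc:
  fixes Y :: "'z::finite \<Rightarrow> 'v::real_inner"
  assumes dist: "distribution mu" and G: "G > 0"
    and Yb: "\<And>z. norm (Y z) \<le> 2 * G" and Yd: "\<And>z z'. norm (Y z - Y z') \<le> 2 * G"
    and Y0: "(\<Sum>z\<in>UNIV. mu z *\<^sub>R Y z) = 0"
    and n: "n \<ge> 1" and L: "L \<ge> 0"
  shows "iexp mu n (\<lambda>us. if norm (Ssum Y us) > real n * (6 * G / sqrt (real n) * (1 + sqrt L)) then 1 else 0)
         \<le> exp (- L)"
proof -
  define c where "c = 2 * G"
  have c: "c > 0" using G unfolding c_def by simp
  have npos: "real n > 0" using n by simp
  have sn: "sqrt (real n) > 0" using npos by simp
  have snsq: "sqrt (real n) * sqrt (real n) = real n" using npos by simp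
  define A0 where "A0 = iexp mu n (\<lambda>us. norm (0 + Ssum Y us))"
  define T where "T = c * sqrt (real n)"
  have T: "T > 0" using c sn unfolding T_def by simp
  have A0b: "A0 \<le> c * sqrt (real n)"
  proof -
    have "A0 \<le> iexp mu n (\<lambda>us. (1 / (2 * T)) * (norm (0 + Ssum Y us))\<^sup>2 + T / 2)"
      unfolding A0_def
    proof (rule iexp_mono[OF dist])
      fix us :: "'z list"
      define x where "x = norm (0 + Ssum Y us)"
      have "0 \<le> (x - T)\<^sup>2" by simp
      then have "2 * T * x \<le> x\<^sup>2 + T\<^sup>2" by (simp add: power2_eq_square algebra_simps)
      then have "x \<le> (x\<^sup>2 + T\<^sup>2) / (2 * T)" using T by (simp add: field_simps)
      also have "\<dots> = (1 / (2 * T)) * x\<^sup>2 + T / 2" using T by (simp add: field_simps power2_eq_square)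
      finally show "norm (0 + Ssum Y us) \<le> (1 / (2 * T)) * (norm (0 + Ssum Y us))\<^sup>2 + T / 2"
        unfolding x_def .
    qed
    also have "\<dots> = (1 / (2 * T)) * iexp mu n (\<lambda>us. (norm (0 + Ssum Y us))\<^sup>2) + T / 2"
      by (rule iexp_affine[OF dist])
    also have "\<dots> \<le> (1 / (2 * T)) * ((norm (0::'v))\<^sup>2 + real n * c\<^sup>2) + T / 2"
      using second_moment[OF dist, of Y c, OF _ Y0, of n 0] Yb T unfolding c_def
      by (intro add_right_mono mult_left_mono) auto
    also have "\<dots> = c * sqrt (real n)"
      using T c sn snsq unfolding T_def by (simp add: field_simps power2_eq_square)
    finally show ?thesis .
  qed
  define ind where "ind us = (if norm (Ssum Y us) > real n * (6 * G / sqrt (real n) * (1 + sqrt L)) then 1 else (0::real))" for us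
  have main: "iexp mu n ind \<le> exp (- L)"
  proof (cases "L = 0")
    case True
    have "iexp mu n ind \<le> iexp mu n (\<lambda>_. 1)"
      by (rule iexp_mono[OF dist]) (simp add: ind_def)
    then show ?thesis using True by (simp add: iexp_const[OF dist])
  next
    case False
    then have Lp: "L > 0" using L by simp
    define t where "t = c * sqrt (2 * real n * L)"
    define l where "l = t / (real n * c\<^sup>2)"
    have t: "t > 0" using c npos Lp unfolding t_def by simp
    have l: "l > 0" using t c npos unfolding l_def by simp
    have tsq: "t\<^sup>2 = c\<^sup>2 * (2 * real n * L)" unfolding t_def using npos Lp
      by (simp add: power_mult_distrib)
    have thr: "A0 + t \<le> real n * (6 * G / sqrt (real n) * (1 + sqrt L))"
    proof -
      have s2: "sqrt 2 \<le> 3"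
        using real_sqrt_le_mono[of 2 9] by simp
      have "t = c * sqrt 2 * sqrt (real n) * sqrt L" unfolding t_def
        by (simp add: real_sqrt_mult)
      also have "\<dots> \<le> c * 3 * sqrt (real n) * sqrt L"
        using s2 c sn L by (intro mult_right_mono mult_left_mono) auto
      finally have "A0 + t \<le> c * sqrt (real n) + c * 3 * sqrt (real n) * sqrt L" using A0b by linarith
      also have "\<dots> \<le> 3 * c * sqrt (real n) * (1 + sqrt L)"
        using c sn by (simp add: algebra_simps)
      also have "\<dots> = real n * (6 * G / sqrt (real n) * (1 + sqrt L))"
      proof -
        have "real n * (6 * G / sqrt (real n) * (1 + sqrt L)) = (real n / sqrt (real n)) * (6 * G * (1 + sqrt L))"
          by simp
        also have "real n / sqrt (real n) = sqrt (real n)" by (rule real_div_sqrt) simp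
        finally show ?thesis unfolding c_def by (simp add: algebra_simps)
      qed
      finally show ?thesis .
    qed
    have "iexp mu n ind \<le> iexp mu n (\<lambda>us. exp (- (l * t)) * exp (l * (norm (0 + Ssum Y us) - A0)))"
    proof (rule iexp_mono[OF dist])
      fix us :: "'z list"
      show "ind us \<le> exp (- (l * t)) * exp (l * (norm (0 + Ssum Y us) - A0))"
      proof (cases "norm (Ssum Y us) > real n * (6 * G / sqrt (real n) * (1 + sqrt L))")
        case True
        then have "norm (Ssum Y us) - A0 - t \<ge> 0" using thr by linarith
        then have "l * (norm (Ssum Y us) - A0 - t) \<ge> 0" using l by simp
        then have "exp (l * (norm (Ssum Y us) - A0 - t)) \<ge> 1" by simp
        moreover have "exp (- (l * t)) * exp (l * (norm (0 + Ssum Y us) - A0)) = exp (l * (norm (Ssum Y us) - A0 - t))"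
          by (simp add: mult_exp_exp algebra_simps)
        ultimately show ?thesis using True by (simp add: ind_def)
      next
        case False
        then show ?thesis by (simp add: ind_def)
      qed
    qed
    also have "\<dots> = exp (- (l * t)) * iexp mu n (\<lambda>us. exp (l * (norm (0 + Ssum Y us) - A0)))"
      by (rule iexp_scale)
    also have "\<dots> \<le> exp (- (l * t)) * exp (real n * (l\<^sup>2 * c\<^sup>2 / 2))"
      using mgf_bound[OF dist _ _ Yd, of l n 0] l c unfolding A0_def c_def
      by (intro mult_left_mono) auto
    also have "\<dots> = exp (- L)"
    proof -
      have "l * t = 2 * L" unfolding l_def using tsq c npos
        by (simp add: field_simps power2_eq_square)
      moreover have "real n * (l\<^sup>2 * c\<^sup>2 / 2) = L" unfolding l_def using tsq c npos
        by (simp add: field_simps power2_eq_square)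
      ultimately show ?thesis by (simp add: mult_exp_exp)
    qed
    finally show ?thesis .
  qed
  then show ?thesis unfolding ind_def .
qed



lemma length_sub [simp]: "length (sub K n ys) = n"
  by (induction n arbitrary: ys) auto

lemma Ssum_nth: "Ssum Y us = (\<Sum>j<length us. Y (us ! j))"
  unfolding Ssum_def by (simp add: sum_list_sum_nth atLeast0LessThan)

lemma tv_le_dmix: "tv_dist (kpow P K z) mu \<le> d_mix P mu K"
  unfolding d_mix_def by (rule Max_ge) auto

lemma block_bound:
  fixes Y :: "'z::finite \<Rightarrow> 'v::real_normed_vector"
  assumes kernel: "stochastic_kernel P" and dist: "distribution mu" and stat: "stationary P mu"
    and K: "1 \<le> K" and k: "k' < K" and n: "1 \<le> n" and nK: "n * K \<le> N"
  shows "pexp mu P N (\<lambda>x. if \<theta> < norm (\<Sum>j<n. Y (x (Suc k' + j * K))) then 1 else 0)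
         \<le> iexp mu n (\<lambda>us. if \<theta> < norm (Ssum Y us) then 1 else 0) + real (n - 1) * d_mix P mu K"
proof -
  define H where "H x = (if \<theta> < norm (\<Sum>j<n. Y (x (Suc k' + j * K))) then 1 else (0::real))" for x
  define g where "g us = (if \<theta> < norm (Ssum Y us) then 1 else (0::real))" for us
  define a where "a = K - Suc k'"
  have "1 \<le> n * K" using n K by simp
  then have N: "1 \<le> N" using nK by linarith
  have "pexp mu P N H = (\<Sum>z\<in>UNIV. mu z * chain P N (\<lambda>ys. H (tofun ys)) z)"
    by (rule pexp_chain[OF stat N])
  also have "\<dots> = (\<Sum>z\<in>UNIV. mu z * chain P (a + N) (\<lambda>ys. H (tofun (drop a ys))) z)"
    by (rule stat_shift[OF stat, symmetric])
  also have "\<dots> = (\<Sum>z\<in>UNIV. mu z * chain P (a + N) (\<lambda>ys. g (sub K n ys)) z)"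
  proof (intro sum.cong refl arg_cong[where f="\<lambda>t. _ * t"] chain_cong)
    fix ys :: "'z list" assume len: "length ys = a + N"
    have "(\<Sum>j<n. Y (tofun (drop a ys) (Suc k' + j * K))) = (\<Sum>j<n. Y (sub K n ys ! j))"
    proof (rule sum.cong[OF refl])
      fix j assume "j \<in> {..<n}"
      then have j: "j < n" by simp
      have "Suc k' + j * K \<le> K + (n - 1) * K"
        using k j by (intro add_mono) auto
      also have "\<dots> = n * K" using n by (cases n) auto
      finally have i: "Suc k' + j * K \<le> N" using nK by simp
      have "tofun (drop a ys) (Suc k' + j * K) = drop a ys ! (k' + j * K)"
        using i len unfolding tofun_def by simp
      also have "\<dots> = ys ! (K - 1 + j * K)"
        using i len k unfolding a_def by (simp add: algebra_simps)
      also have "\<dots> = sub K n ys ! j"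
        using sub_nth[OF K _ j, of ys] nK len by simp
      finally show "Y (tofun (drop a ys) (Suc k' + j * K)) = Y (sub K n ys ! j)" by simp
    qed
    then show "H (tofun (drop a ys)) = g (sub K n ys)"
      unfolding H_def g_def Ssum_nth by simp
  qed
  also have "\<dots> = (\<Sum>z\<in>UNIV. mu z * kexp (kpow P K) n g z)"
    using chain_sub[OF K _ kernel] nK by simp
  also have "\<dots> \<le> iexp mu n g + real (n - 1) * d_mix P mu K"
  proof -
    obtain n' where n': "n = Suc n'" using n by (cases n) auto
    have "(\<Sum>z\<in>UNIV. mu z * kexp (kpow P K) (Suc n') g z) \<le> iexp mu (Suc n') g + real n' * d_mix P mu K"
      by (rule stat_kexp[OF dist kernel stat tv_le_dmix]) (simp add: g_def)
    then show ?thesis unfolding n' by simp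
  qed
  finally show ?thesis unfolding H_def g_def .
qed



lemma det:
  fixes y :: "nat \<Rightarrow> 'v::real_normed_vector"
  assumes K: "1 \<le> K" and nK: "n * K \<le> N" and NK: "N - n * K \<le> K" and N: "1 \<le> N"
    and yb: "\<And>i. norm (y i) \<le> c" and eps: "\<epsilon> \<ge> 0"
    and blocks: "\<And>k'. k' < K \<Longrightarrow> norm (\<Sum>j<n. y (Suc k' + j * K)) \<le> real n * \<epsilon>"
  shows "norm ((1 / real N) *\<^sub>R (\<Sum>i=1..N. y i)) \<le> \<epsilon> + c * real K / real N"
proof -
  have c0: "c \<ge> 0" using yb[of 0] norm_ge_zero[of "y 0"] by linarith
  have "(\<Sum>i=1..N. y i) = (\<Sum>i\<in>{0..<N}. y (Suc i))"
    using sum.atLeast1_atMost_eq[of y N] by (simp add: atLeast0LessThan)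
  also have "\<dots> = (\<Sum>i\<in>{0..<n*K}. y (Suc i)) + (\<Sum>i\<in>{n*K..<N}. y (Suc i))"
    using sum.atLeastLessThan_concat[of 0 "n*K" N "\<lambda>i. y (Suc i)"] nK by simp
  also have "(\<Sum>i\<in>{0..<n*K}. y (Suc i)) = (\<Sum>j<n. \<Sum>i\<in>{j*K..<j*K+K}. y (Suc i))"
    using sum.nat_group[of "\<lambda>i. y (Suc i)" K n] by (simp add: atLeast0LessThan)
  also have "\<dots> = (\<Sum>j<n. \<Sum>k'\<in>{0..<K}. y (Suc (k' + j*K)))"
  proof (rule sum.cong[OF refl])
    fix j
    show "(\<Sum>i\<in>{j*K..<j*K+K}. y (Suc i)) = (\<Sum>k'\<in>{0..<K}. y (Suc (k' + j*K)))"
      using sum.shift_bounds_nat_ivl[of "\<lambda>i. y (Suc i)" 0 "j*K" K] by (simp add: add.commute)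
  qed
  also have "\<dots> = (\<Sum>k'\<in>{0..<K}. \<Sum>j<n. y (Suc k' + j*K))"
    by (subst sum.swap) simp
  finally have split: "(\<Sum>i=1..N. y i) = (\<Sum>k'\<in>{0..<K}. \<Sum>j<n. y (Suc k' + j*K)) + (\<Sum>i\<in>{n*K..<N}. y (Suc i))" .
  have "norm (\<Sum>i=1..N. y i) \<le> norm (\<Sum>k'\<in>{0..<K}. \<Sum>j<n. y (Suc k' + j*K)) + norm (\<Sum>i\<in>{n*K..<N}. y (Suc i))"
    unfolding split by (rule norm_triangle_ineq)
  also have "\<dots> \<le> (\<Sum>k'\<in>{0..<K}. real n * \<epsilon>) + (\<Sum>i\<in>{n*K..<N}. c)"
  proof (rule add_mono)
    show "norm (\<Sum>k'\<in>{0..<K}. \<Sum>j<n. y (Suc k' + j*K)) \<le> (\<Sum>k'\<in>{0..<K}. real n * \<epsilon>)"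
      by (rule order_trans[OF norm_sum sum_mono]) (simp add: blocks[simplified])
    show "norm (\<Sum>i\<in>{n*K..<N}. y (Suc i)) \<le> (\<Sum>i\<in>{n*K..<N}. c)"
      by (rule order_trans[OF norm_sum sum_mono]) (simp add: yb)
  qed
  also have "\<dots> = real K * real n * \<epsilon> + real (N - n*K) * c" by simp
  also have "\<dots> \<le> real N * \<epsilon> + real K * c"
  proof (rule add_mono)
    have "real K * real n \<le> real N" using nK by (metis of_nat_le_iff of_nat_mult mult.commute)
    then show "real K * real n * \<epsilon> \<le> real N * \<epsilon>" using eps by (rule mult_right_mono)
    show "real (N - n*K) * c \<le> real K * c" using NK c0 by (intro mult_right_mono) auto
  qed
  finally have b: "norm (\<Sum>i=1..N. y i) \<le> real N * \<epsilon> + real K * c" .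
  have Np: "real N > 0" using N by simp
  have "norm ((1 / real N) *\<^sub>R (\<Sum>i=1..N. y i)) = norm (\<Sum>i=1..N. y i) / real N"
    using Np by simp
  also have "\<dots> \<le> (real N * \<epsilon> + real K * c) / real N"
    using b Np by (intro divide_right_mono) auto
  also have "\<dots> = \<epsilon> + c * real K / real N" using Np by (simp add: field_simps)
  finally show ?thesis .
qed



lemma pexp_weight_nonneg:
  assumes "stochastic_kernel P" "distribution mu"
  shows "0 \<le> mu (x 1) * (\<Prod>i\<in>{1..<N}. P (x i) (x (Suc i)))"
  using assms unfolding stochastic_kernel_def distribution_def
  by (intro mult_nonneg_nonneg prod_nonneg) auto

lemma pexp_mono:
  assumes "stochastic_kernel P" "distribution mu" "\<And>x. H1 x \<le> H2 x"
  shows "pexp mu P N H1 \<le> pexp mu P N H2"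
  unfolding pexp_def
  by (intro sum_mono mult_left_mono assms(3) pexp_weight_nonneg[OF assms(1,2)])

lemma pexp_lin:
  "pexp mu P N (\<lambda>x. 1 - (\<Sum>k<K. H k x)) = pexp mu P N (\<lambda>_. 1) - (\<Sum>k<K. pexp mu P N (H k))"
  unfolding pexp_def
  by (simp add: right_diff_distrib sum_subtractf sum_distrib_left) (rule sum.swap)

lemma pexp_one:
  assumes "stochastic_kernel P" "distribution mu" "stationary P mu" "1 \<le> N"
  shows "pexp mu P N (\<lambda>_. 1) = 1"
  using assms(2) unfolding pexp_chain[OF assms(3,4)] chain_const[OF assms(1)] distribution_def
  by simp

lemma path_prob_nonneg:
  assumes "stochastic_kernel P" "distribution mu"
  shows "0 \<le> path_prob mu P N E"
  unfolding path_prob_def using pexp_weight_nonneg[OF assms]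
  by (intro sum_nonneg) auto



theorem lemmaA3:
  fixes P :: "'z::finite \<Rightarrow> 'z \<Rightarrow> real"
    and mu :: "'z \<Rightarrow> real"
    and f :: "'v::euclidean_space \<Rightarrow> 'z \<Rightarrow> real"
    and gradf :: "'v \<Rightarrow> 'z \<Rightarrow> 'v"
    and F :: "'v \<Rightarrow> real"
    and gradF :: "'v"
    and KK :: "'v set"
    and G \<delta> :: real
    and N K :: nat
    and w :: 'v
  assumes kernel: "stochastic_kernel P"
    and dist: "distribution mu"
    and stat: "stationary P mu"
    and f_grad: "\<And>z u. ((\<lambda>v. f v z) has_derivative (\<lambda>h. gradf u z \<bullet> h)) (at u)"
    and F_def: "\<And>u. F u = (\<Sum>z\<in>UNIV. mu z * f u z)"
    and bound: "\<And>u z. u \<in> KK \<Longrightarrow> norm (gradf u z) \<le> G"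
    and K_range: "1 \<le> K" "K \<le> N"
    and delta: "\<delta> > real K * (real (N div K) - 1) * d_mix P mu K"
    and w_in: "w \<in> KK"
    and gradF_w: "(F has_derivative (\<lambda>h. gradF \<bullet> h)) (at w)"
  shows "path_prob mu P N
           (\<lambda>x. norm ((1 / real N) *\<^sub>R (\<Sum>i=1..N. gradf w (x i)) - gradF)
                 \<le> 6 * G / sqrt (real (N div K))
                     * (1 + sqrt (ln (real K / (\<delta> - real K * (real (N div K) - 1) * d_mix P mu K))))
                   + 2 * G * real K / real N)
         \<ge> 1 - \<delta>"
proof -
  define n where "n = N div K"
  define d where "d = d_mix P mu K"
  define \<delta>' where "\<delta>' = \<delta> - real K * (real n - 1) * d"
  have mu0: "\<And>z. mu z \<ge> 0" and mu1: "(\<Sum>z\<in>UNIV. mu z) = 1" using dist unfolding distribution_def by auto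
  have n1: "1 \<le> n" unfolding n_def using K_range div_le_mono[of K N K] by simp
  have nK: "n * K \<le> N" unfolding n_def by (simp add: div_times_less_eq_dividend)
  have NK: "N - n * K \<le> K"
  proof -
    have "n * K + N mod K = N" unfolding n_def by (rule div_mult_mod_eq)
    moreover have "N mod K < K" using K_range by simp
    ultimately show ?thesis by linarith
  qed
  have N1: "1 \<le> N" using K_range by simp
  have G0: "0 \<le> G" using bound[OF w_in, of undefined] norm_ge_zero[of "gradf w undefined"] by linarith
  have d0: "0 \<le> d"
  proof -
    have "0 \<le> tv_dist (kpow P K undefined) mu"
      unfolding tv_dist_def by (rule order_trans[OF _ Max_ge[OF _ rangeI[where x="{}"]]]) auto
    then show ?thesis unfolding d_def using tv_le_dmix[of P K undefined mu] by linarith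
  qed
  have d'pos: "\<delta>' > 0" using delta unfolding \<delta>'_def n_def d_def by simp
  define m where "m = (\<Sum>z\<in>UNIV. mu z *\<^sub>R gradf w z)"
  have gF: "gradF = m"
  proof -
    have Feq: "F = (\<lambda>u. \<Sum>z\<in>UNIV. mu z * f u z)" using F_def by auto
    have "(F has_derivative (\<lambda>h. \<Sum>z\<in>UNIV. mu z * (gradf w z \<bullet> h))) (at w)"
      unfolding Feq by (intro has_derivative_sum has_derivative_mult_right f_grad)
    then have "(\<lambda>h. gradF \<bullet> h) = (\<lambda>h. \<Sum>z\<in>UNIV. mu z * (gradf w z \<bullet> h))"
      by (rule has_derivative_unique[OF gradF_w])
    then have "\<And>h. gradF \<bullet> h = m \<bullet> h"
      unfolding m_def by (metis (no_types, lifting) inner_scaleR_left inner_sum_left sum.cong)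
    then have "(gradF - m) \<bullet> (gradF - m) = 0" by (simp add: inner_diff_left)
    then show ?thesis by simp
  qed
  define Y where "Y z = gradf w z - m" for z
  have mb: "norm m \<le> G"
  proof -
    have "norm m \<le> (\<Sum>z\<in>UNIV. norm (mu z *\<^sub>R gradf w z))" unfolding m_def by (rule norm_sum)
    also have "\<dots> \<le> (\<Sum>z\<in>UNIV. mu z * G)"
      by (intro sum_mono) (simp add: mu0 bound[OF w_in] mult_left_mono)
    also have "\<dots> = G" by (simp add: sum_distrib_right[symmetric] mu1)
    finally show ?thesis .
  qed
  have Yb: "norm (Y z) \<le> 2 * G" for z
    using norm_triangle_ineq4[of "gradf w z" m] bound[OF w_in, of z] mb unfolding Y_def by linarith
  have Yd: "norm (Y z - Y z') \<le> 2 * G" for z z'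
    using norm_triangle_ineq4[of "gradf w z" "gradf w z'"] bound[OF w_in, of z] bound[OF w_in, of z']
    unfolding Y_def by simp
  have Y0: "(\<Sum>z\<in>UNIV. mu z *\<^sub>R Y z) = 0"
    unfolding Y_def by (simp add: scaleR_right_diff_distrib sum_subtractf m_def[symmetric] scaleR_sum_left[symmetric] mu1)
  have main: "1 - \<delta> \<le> path_prob mu P N
           (\<lambda>x. norm ((1 / real N) *\<^sub>R (\<Sum>i=1..N. gradf w (x i)) - gradF)
                 \<le> 6 * G / sqrt (real n) * (1 + sqrt (ln (real K / \<delta>'))) + 2 * G * real K / real N)"
  proof (cases "\<delta> \<ge> 1")
    case True
    then show ?thesis using path_prob_nonneg[OF kernel dist] by (smt (verit))
  next
    case False
    have "\<delta>' \<le> \<delta>" unfolding \<delta>'_def using d0 n1 K_range by (simp add: mult_nonneg_nonneg)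
    then have d'1: "\<delta>' < 1" using False by simp
    define L where "L = ln (real K / \<delta>')"
    have Kd: "real K / \<delta>' \<ge> 1" using d'1 d'pos K_range by (simp add: field_simps)
    have L0: "L \<ge> 0" unfolding L_def using Kd by simp
    have expL: "exp (- L) = \<delta>' / real K"
    proof -
      have "exp L = real K / \<delta>'" unfolding L_def using Kd by simp
      then show ?thesis by (simp add: exp_minus)
    qed
    define \<epsilon> where "\<epsilon> = 6 * G / sqrt (real n) * (1 + sqrt L)"
    have eps0: "\<epsilon> \<ge> 0" unfolding \<epsilon>_def using G0 L0 by simp
    define B where "B k' x = (if real n * \<epsilon> < norm (\<Sum>j<n. Y (x (Suc k' + j * K))) then 1 else (0::real))" for k' x
    have ib: "iexp mu n (\<lambda>us. if real n * \<epsilon> < norm (Ssum Y us) then 1 else 0) \<le> exp (- L)"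
    proof (cases "G = 0")
      case True
      then have "Y z = 0" for z using Yb[of z] by simp
      then have "Ssum Y us = 0" for us by (simp add: Ssum_nth)
      then show ?thesis using True by (simp add: \<epsilon>_def iexp_const[OF dist])
    next
      case False
      then have "G > 0" using G0 by simp
      from conc[OF dist this Yb Yd Y0 n1 L0] show ?thesis unfolding \<epsilon>_def .
    qed
    have blk: "pexp mu P N (B k') \<le> \<delta>' / real K + (real n - 1) * d" if k': "k' < K" for k'
    proof -
      have "pexp mu P N (B k') \<le> iexp mu n (\<lambda>us. if real n * \<epsilon> < norm (Ssum Y us) then 1 else 0) + real (n - 1) * d"
        unfolding B_def d_def by (rule block_bound[OF kernel dist stat K_range(1) k' n1 nK])
      also have "\<dots> \<le> \<delta>' / real K + (real n - 1) * d"
        using ib expL n1 by (simp add: of_nat_diff)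
      finally show ?thesis .
    qed
    have pt: "1 - (\<Sum>k'<K. B k' x) \<le> (if norm ((1 / real N) *\<^sub>R (\<Sum>i=1..N. gradf w (x i)) - gradF)
                 \<le> \<epsilon> + 2 * G * real K / real N then 1 else 0)" for x
    proof (cases "\<forall>k'<K. B k' x = 0")
      case True
      have h1: "norm ((1 / real N) *\<^sub>R (\<Sum>i=1..N. Y (x i))) \<le> \<epsilon> + (2 * G) * real K / real N"
      proof (rule det[OF K_range(1) nK NK N1 _ eps0])
        show "norm (Y (x i)) \<le> 2 * G" for i by (rule Yb)
        fix k' assume "k' < K"
        then have "B k' x = 0" using True by simp
        then show "norm (\<Sum>j<n. Y (x (Suc k' + j * K))) \<le> real n * \<epsilon>"
          unfolding B_def by (simp split: if_splits)
      qed
      have h2: "(1 / real N) *\<^sub>R (\<Sum>i=1..N. Y (x i)) = (1 / real N) *\<^sub>R (\<Sum>i=1..N. gradf w (x i)) - gradF"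
        using N1 unfolding Y_def gF by (simp add: sum_subtractf scaleR_right_diff_distrib sum_constant_scaleR)
      have ev: "norm ((1 / real N) *\<^sub>R (\<Sum>i=1..N. gradf w (x i)) - gradF) \<le> \<epsilon> + 2 * G * real K / real N"
        using h1 unfolding h2 .
      have "(\<Sum>k'<K. B k' x) \<ge> 0" unfolding B_def by (intro sum_nonneg) simp
      then show ?thesis using ev by simp
    next
      case False
      then obtain k0 where k0: "k0 < K" "B k0 x \<noteq> 0" by auto
      then have "B k0 x = 1" unfolding B_def by (simp split: if_splits)
      moreover have "B k0 x \<le> (\<Sum>k'<K. B k' x)"
        using k0 by (intro member_le_sum) (auto simp: B_def)
      ultimately have "1 - (\<Sum>k'<K. B k' x) \<le> 0" by simp
      then show ?thesis by simp
    qed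
    have "1 - \<delta> = 1 - (\<Sum>k'<K. \<delta>' / real K + (real n - 1) * d)"
      using K_range unfolding \<delta>'_def by (simp add: field_simps)
    also have "\<dots> \<le> 1 - (\<Sum>k'<K. pexp mu P N (B k'))"
    proof -
      have "(\<Sum>k'<K. pexp mu P N (B k')) \<le> (\<Sum>k'<K. \<delta>' / real K + (real n - 1) * d)"
        by (rule sum_mono) (simp add: blk)
      then show ?thesis by linarith
    qed
    also have "\<dots> = pexp mu P N (\<lambda>x. 1 - (\<Sum>k'<K. B k' x))"
      using pexp_lin[where mu=mu and P=P and N=N and K=K and H=B] pexp_one[OF kernel dist stat N1] by simp
    also have "\<dots> \<le> pexp mu P N (\<lambda>x. if norm ((1 / real N) *\<^sub>R (\<Sum>i=1..N. gradf w (x i)) - gradF)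
                 \<le> \<epsilon> + 2 * G * real K / real N then 1 else 0)"
      by (rule pexp_mono[OF kernel dist pt])
    finally show ?thesis unfolding path_prob_pexp \<epsilon>_def L_def by simp
  qed
  from main show ?thesis unfolding n_def d_def \<delta>'_def .
qed

end
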